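(* Let $x_s<x_t$ be integers, let $C\ge 0$, and let $f:[x_s,x_t]\to\mathbb{R}$ be such that $([x_s,x_t],f)$ is an Ameso($C$) pair. If there exist $x'\in[x_s,x_t]$ and $z\in[x_s,x')$ with $f(z)-f(x')\ge C$, then $\min_{y\in[z,x_t]}f(y)=\min_{y\in[x_s,x_t]}f(y)$.
   Context: For integers $a\le b$, $[a,b]$ denotes the set of integers $\{a,\dots,b\}$ and $[a,b)$ the set $\{a,\dots,b-1\}$. Floors and ceilings of vectors are taken componentwise. A set $D^n\subseteq\mathbb{Z}^n$ is an Ameso set if $\lceil(\vec x+\vec y)/2\rceil,\lfloor(\vec x+\vec y)/2\rfloor\in D^n$ for all $\vec x,\vec y\in D^n$. For $C\ge 0$, $(D^n,f)$ is an Ameso($C$) pair if $D^n$ is an Ameso set, $f:D^n\to\mathbb{R}$ is bounded below, and $f(\vec x)+f(\vec y)+C\ge f(\lceil(\vec x+\vec y)/2\rceil)+f(\lfloor(\vec x+\vec y)/2\rfloor)$ for all $\vec x,\vec y\in D^n$. *)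

theory Defs
  imports Main Complex_Main
begin

text \<open>Ameso sets and Ameso(C) pairs in dimension n = 1 (subsets of the integers).
  Floors and ceilings of the midpoint are taken of the real number (x+y)/2.\<close>

definition ameso_set :: "int set \<Rightarrow> bool" where
  "ameso_set D \<longleftrightarrow>
     (\<forall>x\<in>D. \<forall>y\<in>D. \<lceil>real_of_int (x + y) / 2\<rceil> \<in> D \<and> \<lfloor>real_of_int (x + y) / 2\<rfloor> \<in> D)"

definition ameso_pair :: "real \<Rightarrow> int set \<Rightarrow> (int \<Rightarrow> real) \<Rightarrow> bool" where
  "ameso_pair C D f \<longleftrightarrow>
     ameso_set D \<and> bdd_below (f ` D) \<and>
     (\<forall>x\<in>D. \<forall>y\<in>D. f x + f y + C \<ge>
         f \<lceil>real_of_int (x + y) / 2\<rceil> + f \<lfloor>real_of_int (x + y) / 2\<rfloor>)"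

end

theory Submission
  imports Defs
begin

lemma mid_exact:
  fixes a b p :: int
  assumes "a + b = 2 * p"
  shows "\<lceil>real_of_int (a + b) / 2\<rceil> = p" "\<lfloor>real_of_int (a + b) / 2\<rfloor> = p"
proof -
  have "real_of_int (a + b) / 2 = real_of_int p" using assms by simp
  then show "\<lceil>real_of_int (a + b) / 2\<rceil> = p" "\<lfloor>real_of_int (a + b) / 2\<rfloor> = p" by simp_all
qed

lemma key:
  fixes y z x' :: int and C :: real and f :: "int \<Rightarrow> real"
  assumes am: "\<forall>a\<in>{y..x'}. \<forall>b\<in>{y..x'}. f a + f b + C \<ge>
         f \<lceil>real_of_int (a + b) / 2\<rceil> + f \<lfloor>real_of_int (a + b) / 2\<rfloor>"
    and yz: "y < z" and zx: "z < x'" and fz: "f z \<ge> f x' + C"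
    and ymin: "\<forall>w\<in>{y..x'}. f y \<le> f w" and yx: "f y < f x'" and C0: "C \<ge> 0"
  shows False
proof -
  define S where "S = {y..x'}"
  define Mx where "Mx = Max (f ` S)"
  define T where "T = {w\<in>S. f w = Mx}"
  define p where "p = Min T"
  have finS: "finite S" and neS: "S \<noteq> {}" using yz zx by (auto simp: S_def)
  have le: "\<forall>w\<in>S. f w \<le> Mx" using finS by (auto simp: Mx_def)
  have "Mx \<in> f ` S" using finS neS by (simp add: Mx_def)
  then have neT: "T \<noteq> {}" by (auto simp: T_def)
  have finT: "finite T" using finS by (simp add: T_def)
  have pT: "p \<in> T" using finT neT by (simp add: p_def)
  have pS: "p \<in> S" and fp: "f p = Mx" using pT by (auto simp: T_def)
  have lt: "\<forall>w\<in>S. w < p \<longrightarrow> f w < Mx"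
  proof (intro ballI impI)
    fix w assume w: "w \<in> S" "w < p"
    have "w \<notin> T" using w finT p_def Min_le by fastforce
    then show "f w < Mx" using w le by (auto simp: T_def less_le)
  qed
  have zS: "z \<in> S" and x'S: "x' \<in> S" and yS: "y \<in> S" using yz zx by (auto simp: S_def)
  have Cge: "f p \<ge> f x' + C" using fz le zS fp by force
  have "p \<noteq> x'"
  proof
    assume "p = x'"
    then have "f z < f x'" using lt zS zx fp by auto
    then show False using fz C0 by linarith
  qed
  show False
  proof (cases "p - y \<le> x' - p")
    case True
    define b where "b = 2 * p - y"
    have bS: "b \<in> S" using True pS by (auto simp: S_def b_def)
    have "f y + f b + C \<ge> f \<lceil>real_of_int (y + b) / 2\<rceil> + f \<lfloor>real_of_int (y + b) / 2\<rfloor>"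
      using am yS bS unfolding S_def by blast
    moreover have "y + b = 2 * p" by (simp add: b_def)
    ultimately have "f y + f b + C \<ge> f p + f p" using mid_exact[of y b p] by simp
    moreover have "f b \<le> f p" using le bS fp by auto
    moreover have "f y + C < f p" using Cge yx by linarith
    ultimately show False by linarith
  next
    case False
    define a where "a = 2 * p - x'"
    have aS: "a \<in> S" using False pS by (auto simp: S_def a_def)
    have ap: "a < p" using \<open>p \<noteq> x'\<close> pS by (auto simp: S_def a_def)
    have "f a + f x' + C \<ge> f \<lceil>real_of_int (a + x') / 2\<rceil> + f \<lfloor>real_of_int (a + x') / 2\<rfloor>"
      using am aS x'S unfolding S_def by blast
    moreover have "a + x' = 2 * p" by (simp add: a_def)
    ultimately have "f a + f x' + C \<ge> f p + f p" using mid_exact[of a x' p] by simp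
    moreover have "f a < f p" using lt aS ap fp by auto
    ultimately show False using Cge by linarith
  qed
qed

theorem corollary3:
  fixes xs xt z x' :: int and C :: real and f :: "int \<Rightarrow> real"
  assumes "xs < xt"
    and "C \<ge> 0"
    and "ameso_pair C {xs..xt} f"
    and "x' \<in> {xs..xt}"
    and "z \<in> {xs..<x'}"
    and "f z - f x' \<ge> C"
  shows "Min (f ` {z..xt}) = Min (f ` {xs..xt})"
proof -
  define A where "A = {xs..xt}"
  define m where "m = Min (f ` A)"
  have finA: "finite A" and neA: "A \<noteq> {}" using assms(1) by (auto simp: A_def)
  have "m \<in> f ` A" using finA neA by (simp add: m_def)
  then obtain y where yA: "y \<in> A" and fy: "f y = m" by auto
  have mle: "\<forall>w\<in>A. m \<le> f w" using finA by (auto simp: m_def)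
  have am: "\<forall>a\<in>A. \<forall>b\<in>A. f a + f b + C \<ge>
         f \<lceil>real_of_int (a + b) / 2\<rceil> + f \<lfloor>real_of_int (a + b) / 2\<rfloor>"
    using assms(3) by (simp add: ameso_pair_def A_def)
  have sub: "{z..xt} \<subseteq> A" and nez: "{z..xt} \<noteq> {}" using assms(4,5) by (auto simp: A_def)
  have ex: "\<exists>w\<in>{z..xt}. f w \<le> m"
  proof (rule ccontr)
    assume nw: "\<not> ?thesis"
    have "\<not> z \<le> y" using nw yA fy by (auto simp: A_def)
    moreover have "x' \<in> {z..xt}" using assms(4,5) by auto
    then have "\<not> f x' \<le> m" using nw by blast
    then have "f y < f x'" using fy by linarith
    moreover have "{y..x'} \<subseteq> A" using yA assms(4) by (auto simp: A_def)
    ultimately show False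
      using key[where y=y and z=z and x'=x' and C=C and f=f] am mle fy assms(2,5,6) by (auto simp: subset_iff)
  qed
  then obtain w where w: "w \<in> {z..xt}" "f w \<le> m" by blast
  have "Min (f ` {z..xt}) \<le> f w" using w by simp
  moreover have "m \<le> Min (f ` {z..xt})" using sub nez mle by auto
  ultimately show ?thesis using w unfolding m_def A_def by linarith
qed

end
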